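(* Let $X\subseteq G_n$ be a finite set of Hermitian Pauli operators. If there exist a Pauli operator $x$, a determining tree $\tau_x$ for $x$ over $X$, and a determining tree $\tau'_{-x}$ for $-x$ over $X$ such that $D(\tau_x)=D(\tau'_{-x})$, then $X$ is state-independently AvN in a partial closure, i.e. $\mathbb{T}_{\mathbb{Z}_2}(\overline{X})$ is inconsistent.
   Context: $G_n$ is the $n$-qubit Pauli group ($c\,P_1\otimes\cdots\otimes P_n$, $c\in\{\pm1,\pm i\}$, $P_j\in\{I,X,Y,Z\}$). The partial closure $\overline{X}$ of $X$ in $G_n$ is the smallest subset of $G_n$ containing $X\cup\{I\}$ that is closed under products of commuting pairs (if $a,b\in\overline{X}$ and $ab=ba$ then $ab\in\overline{X}$); equivalently the smallest abelian partial group in $G_n$ (with commutativity as the commeasurability relation and multiplication defined on commuting pairs) containing $X$. For a set $Y$ of Hermitian Pauli operators, its measurement cover $\mathcal{M}_Y$ is the family of maximal pairwise-commuting subsets of $Y$, and its linear theory is $\mathbb{T}_{\mathbb{Z}_2}(Y)=\{\langle C,r,a\rangle: C\in\mathcal{M}_Y,\ r:C\to\mathbb{Z}_2,\ a\in\mathbb{Z}_2,\ \prod_{y\in C}y^{r(y)}=(-1)^aI\}$; it is inconsistent if no $g:Y\to\mathbb{Z}_2$ satisfies $\sum_{y\in C}r(y)g(y)=a$ (mod 2) for all $\langle C,r,a\rangle$ in it. $X$ is state-independently AvN in a partial closure if $\mathbb{T}_{\mathbb{Z}_2}(\overline{X})$ is inconsistent. A determining tree $\tau_x$ for a Pauli operator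 $x$ over $X$ is a finite rooted tree whose nodes are labelled by Pauli operators and whose leaves are labelled by elements of $X$, such that the root is $x$, the children of any node pairwise commute, and every non-leaf node is the operator product of its children. The determining set $D(\tau_x)$ is the set of operators occurring an odd number of times as leaf labels of $\tau_x$. *)

theory Defs
  imports Main "HOL-Library.Z2"
begin

datatype pauli1 = PI | PX | PY | PZ

text \<open>Single-qubit product: returns (k, R) meaning  P * Q = i^k R.\<close>
fun mult1 :: "pauli1 \<Rightarrow> pauli1 \<Rightarrow> nat \<times> pauli1" where
  "mult1 PI q = (0, q)"
| "mult1 p PI = (0, p)"
| "mult1 PX PX = (0, PI)"
| "mult1 PY PY = (0, PI)"
| "mult1 PZ PZ = (0, PI)"
| "mult1 PX PY = (1, PZ)"
| "mult1 PY PX = (3, PZ)"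
| "mult1 PY PZ = (1, PX)"
| "mult1 PZ PY = (3, PX)"
| "mult1 PZ PX = (1, PY)"
| "mult1 PX PZ = (3, PY)"

text \<open>A Pauli operator  i^k P_1 \<otimes> ... \<otimes> P_n  is represented by (k, [P_1,...,P_n]).\<close>
type_synonym pauli = "nat \<times> pauli1 list"

definition pauli_op :: "nat \<Rightarrow> pauli \<Rightarrow> bool" where
  "pauli_op n p \<longleftrightarrow> fst p < 4 \<and> length (snd p) = n"

definition pmult :: "pauli \<Rightarrow> pauli \<Rightarrow> pauli" where
  "pmult p q = ((fst p + fst q + sum_list (map2 (\<lambda>a b. fst (mult1 a b)) (snd p) (snd q))) mod 4,
                map2 (\<lambda>a b. snd (mult1 a b)) (snd p) (snd q))"

definition pid :: "nat \<Rightarrow> pauli" where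
  "pid n = (0, replicate n PI)"

definition pneg :: "pauli \<Rightarrow> pauli" where
  "pneg p = ((fst p + 2) mod 4, snd p)"

definition pcommute :: "pauli \<Rightarrow> pauli \<Rightarrow> bool" where
  "pcommute a b \<longleftrightarrow> pmult a b = pmult b a"

definition hermitian :: "nat \<Rightarrow> pauli \<Rightarrow> bool" where
  "hermitian n p \<longleftrightarrow> pauli_op n p \<and> (fst p = 0 \<or> fst p = 2)"

inductive_set partial_closure :: "nat \<Rightarrow> pauli set \<Rightarrow> pauli set" for n X where
  base: "x \<in> X \<Longrightarrow> x \<in> partial_closure n X"
| ident: "pid n \<in> partial_closure n X"
| prod: "a \<in> partial_closure n X \<Longrightarrow> b \<in> partial_closure n X \<Longrightarrow> pcommute a b
          \<Longrightarrow> pmult a b \<in> partial_closure n X"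

definition pairwise_commuting :: "pauli set \<Rightarrow> bool" where
  "pairwise_commuting C \<longleftrightarrow> (\<forall>a\<in>C. \<forall>b\<in>C. pcommute a b)"

definition meas_cover :: "pauli set \<Rightarrow> pauli set set" where
  "meas_cover Y = {C. C \<subseteq> Y \<and> pairwise_commuting C \<and>
                      (\<forall>C'. C \<subseteq> C' \<and> C' \<subseteq> Y \<and> pairwise_commuting C' \<longrightarrow> C' = C)}"

definition sign_id :: "nat \<Rightarrow> bit \<Rightarrow> pauli" where
  "sign_id n a = ((if a = 1 then 2 else 0), replicate n PI)"

text \<open>Product  \<Prod>_{y\<in>C} y^{r(y)}  of a finite pairwise commuting set (order irrelevant);
  computed along an enumeration of C.\<close>
definition prod_pow :: "nat \<Rightarrow> pauli set \<Rightarrow> (pauli \<Rightarrow> bit) \<Rightarrow> pauli \<Rightarrow> bool" where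
  "prod_pow n C r p \<longleftrightarrow>
     (\<exists>ys. distinct ys \<and> set ys = C \<and>
        foldr pmult (map (\<lambda>y. if r y = 1 then y else pid n) ys) (pid n) = p)"

definition linear_theory :: "nat \<Rightarrow> pauli set \<Rightarrow> (pauli set \<times> (pauli \<Rightarrow> bit) \<times> bit) set" where
  "linear_theory n Y = {(C, r, a). C \<in> meas_cover Y \<and> (\<forall>y. y \<notin> C \<longrightarrow> r y = 0)
                          \<and> prod_pow n C r (sign_id n a)}"

definition theory_inconsistent :: "pauli set \<Rightarrow> (pauli set \<times> (pauli \<Rightarrow> bit) \<times> bit) set \<Rightarrow> bool" where
  "theory_inconsistent Y T \<longleftrightarrow>
     \<not> (\<exists>g :: pauli \<Rightarrow> bit. \<forall>(C, r, a) \<in> T. (\<Sum>y\<in>C. r y * g y) = a)"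

definition state_indep_AvN_partial_closure :: "nat \<Rightarrow> pauli set \<Rightarrow> bool" where
  "state_indep_AvN_partial_closure n X \<longleftrightarrow>
     theory_inconsistent (partial_closure n X) (linear_theory n (partial_closure n X))"

datatype ptree = PNode pauli "ptree list"

fun label :: "ptree \<Rightarrow> pauli" where
  "label (PNode p _) = p"

fun leaves :: "ptree \<Rightarrow> pauli list" where
  "leaves (PNode p []) = [p]"
| "leaves (PNode p (t # ts)) = concat (map leaves (t # ts))"

fun valid_tree :: "pauli set \<Rightarrow> ptree \<Rightarrow> bool" where
  "valid_tree X (PNode p []) \<longleftrightarrow> p \<in> X"
| "valid_tree X (PNode p (t # ts)) \<longleftrightarrow>
     (\<forall>s\<in>set (t # ts). valid_tree X s)
     \<and> (\<forall>i<length (t # ts). \<forall>j<length (t # ts). pcommute (label ((t # ts) ! i)) (label ((t # ts) ! j)))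
     \<and> p = foldr pmult (map label ts) (label t)"

definition determining_tree :: "nat \<Rightarrow> pauli set \<Rightarrow> pauli \<Rightarrow> ptree \<Rightarrow> bool" where
  "determining_tree n X x t \<longleftrightarrow> label t = x \<and> valid_tree X t"

definition det_set :: "ptree \<Rightarrow> pauli set" where
  "det_set t = {p. odd (count_list (leaves t) p)}"

end

theory Submission
  imports Defs
begin

lemma m1_assoc: "snd (mult1 (snd (mult1 a b)) c) = snd (mult1 a (snd (mult1 b c)))"
  by (cases a; cases b; cases c) auto
lemma m1_phase: "(fst (mult1 a b) + fst (mult1 (snd (mult1 a b)) c)) mod 4 = (fst (mult1 b c) + fst (mult1 a (snd (mult1 b c)))) mod 4"
  by (cases a; cases b; cases c) auto
lemma m1_sq: "mult1 a a = (0, PI)" by (cases a) auto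
lemma m1_PIr: "mult1 a PI = (0, a)" by (cases a) auto

lemma mod4a: "((ka+kb+P) mod 4 + kc + Q) mod 4 = ((ka+kb+kc) + (P+Q) mod 4) mod (4::nat)"
proof -
  have "((ka+kb+P) mod 4 + kc + Q) mod 4 = ((ka+kb+P) mod 4 + (kc + Q)) mod 4" by (simp only: add.assoc)
  also have "\<dots> = ((ka+kb+P) + (kc+Q)) mod 4" by (rule mod_add_left_eq)
  also have "(ka+kb+P) + (kc+Q) = (ka+kb+kc) + (P+Q)" by simp
  also have "((ka+kb+kc) + (P+Q)) mod 4 = ((ka+kb+kc) + (P+Q) mod 4) mod 4" by (rule mod_add_right_eq[symmetric])
  finally show ?thesis .
qed
lemma mod4b: "(ka + (kb+kc+R) mod 4 + S) mod 4 = ((ka+kb+kc) + (R+S) mod 4) mod (4::nat)"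
proof -
  have "(ka + (kb+kc+R) mod 4 + S) mod 4 = ((kb+kc+R) mod 4 + (ka + S)) mod 4" by (simp only: ac_simps)
  also have "\<dots> = ((kb+kc+R) + (ka+S)) mod 4" by (rule mod_add_left_eq)
  also have "(kb+kc+R) + (ka+S) = (ka+kb+kc) + (R+S)" by simp
  also have "((ka+kb+kc) + (R+S)) mod 4 = ((ka+kb+kc) + (R+S) mod 4) mod 4" by (rule mod_add_right_eq[symmetric])
  finally show ?thesis .
qed
lemma mod4_comb: assumes "(A+B) mod 4 = (C+D) mod 4" "(a+b) mod 4 = (c+d) mod (4::nat)"
  shows "((a+b)+(A+B)) mod 4 = ((c+d)+(C+D)) mod 4"
  using mod_add_cong[OF assms(2) assms(1)] .
lemma pneg_ar: "(a + (b + 2) mod 4 + s) mod 4 = ((a + b + s) mod 4 + 2) mod (4::nat)"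
proof -
  have "(a + (b + 2) mod 4 + s) mod 4 = ((b + 2) mod 4 + (a + s)) mod 4" by (simp only: ac_simps)
  also have "\<dots> = ((b+2) + (a+s)) mod 4" by (rule mod_add_left_eq)
  also have "(b+2) + (a+s) = (a+b+s) + 2" by simp
  also have "((a+b+s) + 2) mod 4 = ((a + b + s) mod 4 + 2) mod 4" by (rule mod_add_left_eq[symmetric])
  finally show ?thesis .
qed
lemma pneg_al: "((b + 2) mod 4 + a + s) mod 4 = ((b + a + s) mod 4 + 2) mod (4::nat)"
proof -
  have "((b + 2) mod 4 + a + s) mod 4 = ((b + 2) mod 4 + (a + s)) mod 4" by (simp only: ac_simps)
  also have "\<dots> = ((b+2) + (a+s)) mod 4" by (rule mod_add_left_eq)
  also have "(b+2) + (a+s) = (b+a+s) + 2" by simp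
  also have "((b+a+s) + 2) mod 4 = ((b + a + s) mod 4 + 2) mod 4" by (rule mod_add_left_eq[symmetric])
  finally show ?thesis .
qed
lemma k4: "(2*k) mod 4 = 0 \<Longrightarrow> k < 4 \<Longrightarrow> k = 0 \<or> k = (2::nat)"
proof -
  assume "(2*k) mod 4 = 0" "k < 4"
  moreover have "k = 0 \<or> k = 1 \<or> k = 2 \<or> k = 3" using \<open>k<4\<close> by arith
  ultimately show ?thesis by auto
qed

abbreviation "ph xs ys \<equiv> sum_list (map2 (\<lambda>a b. fst (mult1 a b)) xs ys)"
abbreviation "pr xs ys \<equiv> map2 (\<lambda>a b. snd (mult1 a b)) xs ys"

lemma pr_assoc: "pr (pr xs ys) zs = pr xs (pr ys zs)"
proof (induction xs arbitrary: ys zs)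
  case (Cons x xs) then show ?case by (cases ys; cases zs) (auto simp: m1_assoc)
qed simp

lemma ph_assoc: "length ys = length xs \<Longrightarrow> length zs = length xs \<Longrightarrow> (ph xs ys + ph (pr xs ys) zs) mod 4 = (ph ys zs + ph xs (pr ys zs)) mod 4"
proof (induction xs arbitrary: ys zs)
  case (Cons x xs)
  show ?case
  proof (cases ys)
    case (Cons y ys') show ?thesis
    proof (cases zs)
      case (Cons z zs')
      have 1: "(ph xs ys' + ph (pr xs ys') zs') mod 4 = (ph ys' zs' + ph xs (pr ys' zs')) mod 4" using Cons.IH Cons.prems \<open>ys = _\<close> \<open>zs = _\<close> by simp
      have 2: "(fst (mult1 x y) + fst (mult1 (snd (mult1 x y)) z)) mod 4 = (fst (mult1 y z) + fst (mult1 x (snd (mult1 y z)))) mod 4" by (rule m1_phase)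
      have e1: "ph (x#xs) (y#ys') + ph (pr (x#xs) (y#ys')) (z#zs') = (fst (mult1 x y) + fst (mult1 (snd (mult1 x y)) z)) + (ph xs ys' + ph (pr xs ys') zs')" by simp
      have e2: "ph (y#ys') (z#zs') + ph (x#xs) (pr (y#ys') (z#zs')) = (fst (mult1 y z) + fst (mult1 x (snd (mult1 y z)))) + (ph ys' zs' + ph xs (pr ys' zs'))" by simp
      show ?thesis unfolding \<open>ys = _\<close> \<open>zs = _\<close> e1 e2 by (rule mod4_comb[OF 1 2])
    qed (use Cons.prems in simp)
  qed (use Cons.prems in simp)
qed simp

lemma pmult_assoc: assumes "pauli_op n a" "pauli_op n b" "pauli_op n c"
  shows "pmult (pmult a b) c = pmult a (pmult b c)"
proof -
  obtain ka xs where a: "a = (ka, xs)" by fastforce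
  obtain kb ys where b: "b = (kb, ys)" by fastforce
  obtain kc zs where c: "c = (kc, zs)" by fastforce
  have h: "(ph xs ys + ph (pr xs ys) zs) mod 4 = (ph ys zs + ph xs (pr ys zs)) mod 4" using assms a b c by (intro ph_assoc) (auto simp: pauli_op_def)
  have "((ka + kb + ph xs ys) mod 4 + kc + ph (pr xs ys) zs) mod 4
      = (ka + (kb + kc + ph ys zs) mod 4 + ph xs (pr ys zs)) mod 4"
    using h mod4a[of ka kb "ph xs ys" kc "ph (pr xs ys) zs"] mod4b[of ka kb kc "ph ys zs" "ph xs (pr ys zs)"] by simp
  then show ?thesis by (simp add: a b c pmult_def pr_assoc)
qed

lemma pmult_sq: "pmult p p = ((2 * fst p) mod 4, replicate (length (snd p)) PI)"
proof -
  have h: "ph xs xs = 0" "pr xs xs = replicate (length xs) PI" for xs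
    by (induction xs) (auto simp: m1_sq)
  show ?thesis unfolding pmult_def h by (simp add: mult_2)
qed

lemma pr_PI_l: "pr (replicate (length ys) PI) ys = ys" "ph (replicate (length ys) PI) ys = 0"
  by (induction ys) auto
lemma pr_PI_r: "pr xs (replicate (length xs) PI) = xs" "ph xs (replicate (length xs) PI) = 0"
  by (induction xs) (auto simp: m1_PIr)

lemma pid_l: assumes "pauli_op n p" shows "pmult (pid n) p = p"
proof -
  obtain k ps where p: "p = (k, ps)" by fastforce
  have "n = length ps" "k < 4" using assms p by (auto simp: pauli_op_def)
  then show ?thesis unfolding p pmult_def pid_def by (simp only: pr_PI_l fst_conv snd_conv) simp
qed
lemma pid_r: assumes "pauli_op n p" shows "pmult p (pid n) = p"
proof -
  obtain k ps where p: "p = (k, ps)" by fastforce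
  have "n = length ps" "k < 4" using assms p by (auto simp: pauli_op_def)
  then show ?thesis unfolding p pmult_def pid_def by (simp only: pr_PI_r fst_conv snd_conv) simp
qed

lemma herm_sq: "hermitian n p \<Longrightarrow> pmult p p = pid n"
  by (auto simp: hermitian_def pauli_op_def pmult_sq pid_def)

lemma pmult_op: "pauli_op n a \<Longrightarrow> pauli_op n b \<Longrightarrow> pauli_op n (pmult a b)"
  by (auto simp: pauli_op_def pmult_def)

lemma pcomm_sym: "pcommute a b \<Longrightarrow> pcommute b a" by (simp add: pcommute_def)

lemma pcomm_prod: assumes "pauli_op n d" "pauli_op n a" "pauli_op n b" "pcommute d a" "pcommute d b"
  shows "pcommute d (pmult a b)"
proof -
  have "pmult d (pmult a b) = pmult (pmult d a) b" using assms(1-3) pmult_assoc by metis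
  also have "\<dots> = pmult (pmult a d) b" using assms(4) by (simp add: pcommute_def)
  also have "\<dots> = pmult a (pmult d b)" using assms(1-3) pmult_assoc by metis
  also have "\<dots> = pmult a (pmult b d)" using assms(5) by (simp add: pcommute_def)
  also have "\<dots> = pmult (pmult a b) d" using assms(1-3) pmult_assoc by metis
  finally show ?thesis by (simp add: pcommute_def)
qed

lemma herm_prod: assumes "hermitian n a" "hermitian n b" "pcommute a b"
  shows "hermitian n (pmult a b)"
proof -
  have oa: "pauli_op n a" and ob: "pauli_op n b" using assms by (auto simp: hermitian_def)
  have op: "pauli_op n (pmult a b)" using oa ob pmult_op by blast
  have "pmult (pmult a b) (pmult a b) = pmult (pmult a b) (pmult b a)"
    using assms(3) by (simp add: pcommute_def)
  also have "\<dots> = pmult a (pmult b (pmult b a))" using pmult_assoc[OF oa ob pmult_op[OF ob oa]] .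
  also have "\<dots> = pmult a (pmult (pmult b b) a)" using pmult_assoc[OF ob ob oa] by simp
  also have "\<dots> = pmult a a" using assms herm_sq[of n b] pid_l[of n a]
    by (simp add: hermitian_def)
  also have "\<dots> = pid n" using herm_sq assms by blast
  finally have "(2 * fst (pmult a b)) mod 4 = 0" by (simp add: pmult_sq pid_def)
  moreover have "fst (pmult a b) < 4" using op by (simp add: pauli_op_def)
  ultimately have "fst (pmult a b) = 0 \<or> fst (pmult a b) = 2" by (rule k4)
  then show ?thesis using op by (simp add: hermitian_def)
qed

lemma closure_herm: assumes "\<forall>y\<in>X. hermitian n y" and "y \<in> partial_closure n X"
  shows "hermitian n y"
  using assms(2)
proof induction
  case (base x) then show ?case using assms(1) by blast
next
  case ident then show ?case by (simp add: hermitian_def pauli_op_def pid_def)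
next
  case (prod a b) then show ?case using herm_prod by blast
qed

lemma UNIV_pauli1: "(UNIV :: pauli1 set) = {PI, PX, PY, PZ}"
  using pauli1.exhaust by auto

lemma finite_ops: "finite {p. pauli_op n p}"
proof -
  have "{p. pauli_op n p} \<subseteq> {0..<4} \<times> {xs. set xs \<subseteq> UNIV \<and> length xs = n}"
    by (auto simp: pauli_op_def)
  moreover have "finite ({0..<(4::nat)} \<times> {xs :: pauli1 list. set xs \<subseteq> UNIV \<and> length xs = n})"
    by (intro finite_cartesian_product finite_lists_length_eq) (auto simp: UNIV_pauli1)
  ultimately show ?thesis by (rule finite_subset)
qed

lemma maximal_ext:
  assumes "finite Y" "S \<subseteq> Y" "P S"
  shows "\<exists>C. S \<subseteq> C \<and> C \<subseteq> Y \<and> P C \<and> (\<forall>C'. C \<subseteq> C' \<and> C' \<subseteq> Y \<and> P C' \<longrightarrow> C' = C)"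
  using assms(2,3)
proof (induction "card (Y - S)" arbitrary: S rule: less_induct)
  case less
  show ?case
  proof (cases "\<exists>C'. S \<subseteq> C' \<and> C' \<subseteq> Y \<and> P C' \<and> C' \<noteq> S")
    case True
    then obtain C' where c: "S \<subseteq> C'" "C' \<subseteq> Y" "P C'" "C' \<noteq> S" by blast
    have "Y - C' \<subset> Y - S" using c by blast
    then have "card (Y - C') < card (Y - S)"
      using assms(1) by (intro psubset_card_mono) auto
    from less(1)[OF this c(2,3)] obtain C where h:
      "C' \<subseteq> C" "C \<subseteq> Y" "P C" "\<forall>C''. C \<subseteq> C'' \<and> C'' \<subseteq> Y \<and> P C'' \<longrightarrow> C'' = C" by (elim exE conjE)
    have "S \<subseteq> C" using h(1) c(1) by (rule order_trans[rotated])
    show ?thesis by (rule exI[of _ C], intro conjI; fact)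
  next
    case False
    have "\<forall>C'. S \<subseteq> C' \<and> C' \<subseteq> Y \<and> P C' \<longrightarrow> C' = S" using False by blast
    then show ?thesis using less.prems by (intro exI[of _ S] conjI) auto
  qed
qed

lemma foldr_pids: "foldr pmult (map (\<lambda>_. pid n) zs) (pid n) = pid n"
proof -
  have "pmult (pid n) (pid n) = pid n" by (rule pid_l) (simp add: pauli_op_def pid_def)
  then show ?thesis by (induction zs) auto
qed

lemma keyl:
  assumes fin: "finite Y"
    and cons: "\<forall>(C, r, a)\<in>linear_theory n Y. (\<Sum>y\<in>C. r y * g y) = a"
    and S: "S \<subseteq> Y" "pairwise_commuting S"
    and ys: "distinct ys" "set ys = S" "foldr pmult ys (pid n) = sign_id n a"
  shows "(\<Sum>y\<in>S. g y) = a"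
proof -
  obtain C where C: "S \<subseteq> C" "C \<subseteq> Y" "pairwise_commuting C"
     "\<forall>C'. C \<subseteq> C' \<and> C' \<subseteq> Y \<and> pairwise_commuting C' \<longrightarrow> C' = C"
    using maximal_ext[of Y S pairwise_commuting, OF fin S] by blast
  have Cm: "C \<in> meas_cover Y" using C unfolding meas_cover_def by blast
  have finC: "finite C" using C(2) fin finite_subset by blast
  obtain zs where zs: "distinct zs" "set zs = C - S"
    using finite_distinct_list[of "C - S"] finC by blast
  define r where "r = (\<lambda>y. if y \<in> S then (1::bit) else 0)"
  have m1: "map (\<lambda>y. if r y = 1 then y else pid n) ys = ys"
    using ys(2) by (auto simp: r_def intro!: map_idI)
  have m2: "map (\<lambda>y. if r y = 1 then y else pid n) zs = map (\<lambda>_. pid n) zs"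
    using zs(2) by (auto simp: r_def)
  have "foldr pmult (map (\<lambda>y. if r y = 1 then y else pid n) (ys @ zs)) (pid n) = sign_id n a"
    using ys(3) by (simp only: map_append foldr_append m1 m2 foldr_pids o_apply)
  moreover have "distinct (ys @ zs)" "set (ys @ zs) = C" using ys zs C(1) by auto
  ultimately have "prod_pow n C r (sign_id n a)" unfolding prod_pow_def by blast
  moreover have "\<forall>y. y \<notin> C \<longrightarrow> r y = 0" using C(1) by (auto simp: r_def)
  ultimately have "(C, r, a) \<in> linear_theory n Y" using Cm by (simp add: linear_theory_def)
  from bspec[OF cons this] have s1: "(\<Sum>y\<in>C. r y * g y) = a" by (simp only: prod.case)
  have s2: "(\<Sum>y\<in>C. r y * g y) = (\<Sum>y\<in>C. if y \<in> S then g y else 0)"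
    by (rule sum.cong) (auto simp: r_def)
  have s3: "(\<Sum>y\<in>C. if y \<in> S then g y else 0) = sum g (C \<inter> S)" by (rule sum.inter_restrict[OF finC, symmetric])
  have s4: "C \<inter> S = S" using C(1) by blast
  show ?thesis using s1 s2 s3 s4 by simp
qed

lemma pneg_r: "pmult a (pneg b) = pneg (pmult a b)"
  unfolding pmult_def pneg_def by (simp only: fst_conv snd_conv pneg_ar)
lemma pneg_l: "pmult (pneg b) a = pneg (pmult b a)"
  unfolding pmult_def pneg_def by (simp only: fst_conv snd_conv pneg_al)

lemma bit2: "(x::bit) = 0 \<or> x = 1" by (cases x) simp_all
lemma bit_self: "(x::bit) + x = 0" using bit2[of x] by auto

lemma foldr_comm: "\<forall>l\<in>set ls. pcommute d l \<and> pauli_op n l \<Longrightarrow> pcommute d c \<Longrightarrow> pauli_op n d \<Longrightarrow> pauli_op n c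
   \<Longrightarrow> pcommute d (foldr pmult ls c) \<and> pauli_op n (foldr pmult ls c)"
proof (induction ls)
  case (Cons l ls) then show ?case using pcomm_prod[of n d l "foldr pmult ls c"] pmult_op by auto
qed simp

lemma sum_list_concat': "sum_list (map g (concat xss)) = sum_list (map (\<lambda>xs. sum_list (map g xs)) xss)"
  by (induction xss) auto

lemma foldr_cl:
  fixes g :: "pauli \<Rightarrow> bit"
  assumes clo: "\<And>a b. a \<in> Y \<Longrightarrow> b \<in> Y \<Longrightarrow> pcommute a b \<Longrightarrow> pmult a b \<in> Y"
    and add: "\<And>a b. a \<in> Y \<Longrightarrow> b \<in> Y \<Longrightarrow> pcommute a b \<Longrightarrow> g (pmult a b) = g a + g b"
    and ops: "\<And>y. y \<in> Y \<Longrightarrow> pauli_op n y"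
  shows "set ls \<subseteq> Y \<Longrightarrow> c \<in> Y \<Longrightarrow> \<forall>u\<in>set ls. \<forall>v\<in>set ls. pcommute u v \<Longrightarrow> \<forall>u\<in>set ls. pcommute u c
    \<Longrightarrow> foldr pmult ls c \<in> Y \<and> g (foldr pmult ls c) = g c + sum_list (map g ls)"
proof (induction ls)
  case (Cons l ls)
  have IH: "foldr pmult ls c \<in> Y" "g (foldr pmult ls c) = g c + sum_list (map g ls)" using Cons by auto
  have "l \<in> Y" using Cons.prems by auto
  have h1: "\<forall>x\<in>set ls. pcommute l x \<and> pauli_op n x" using Cons.prems ops by auto
  have cm: "pcommute l (foldr pmult ls c)" using foldr_comm[OF h1] Cons.prems ops \<open>l \<in> Y\<close> by auto
  have m: "pmult l (foldr pmult ls c) \<in> Y" using clo[OF \<open>l \<in> Y\<close> IH(1) cm] .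
  have "g (pmult l (foldr pmult ls c)) = g l + (g c + sum_list (map g ls))"
    using add[OF \<open>l \<in> Y\<close> IH(1) cm] IH(2) by metis
  also have "\<dots> = g c + (g l + sum_list (map g ls))" by (rule add.left_commute)
  also have "g l + sum_list (map g ls) = sum_list (map g (l # ls))" by (simp only: list.map sum_list.Cons)
  finally show ?case using m by (simp only: foldr_Cons o_apply)
qed simp

lemma sum_det: "sum_list (map (g :: pauli \<Rightarrow> bit) xs) = sum g {p. odd (count_list xs p)}"
proof (induction xs)
  case Nil then show ?case by simp
next
  case (Cons y xs)
  define D where "D = {p. odd (count_list xs p)}"
  have "D \<subseteq> set xs"
  proof
    fix p assume "p \<in> D"
    then have "count_list xs p \<noteq> 0" unfolding D_def by (metis mem_Collect_eq even_zero)
    then show "p \<in> set xs" by (simp add: count_list_0_iff)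
  qed
  then have finD: "finite D" by (rule finite_subset) simp
  show ?case
  proof (cases "y \<in> D")
    case True
    have e: "{p. odd (count_list (y # xs) p)} = D - {y}" using True by (auto simp: D_def)
    have "sum g D = g y + sum g (D - {y})" using sum.remove[OF finD True] .
    then have "g y + sum g D = sum g (D - {y})" by (metis add.assoc bit_self add.left_neutral)
    then show ?thesis using Cons e by (simp add: D_def)
  next
    case False
    have e: "{p. odd (count_list (y # xs) p)} = insert y D" using False by (auto simp: D_def)
    show ?thesis using Cons e False finD by (simp add: D_def)
  qed
qed

lemma tree_l:
  fixes g :: "pauli \<Rightarrow> bit"
  assumes XY: "X \<subseteq> Y"
    and clo: "\<And>a b. a \<in> Y \<Longrightarrow> b \<in> Y \<Longrightarrow> pcommute a b \<Longrightarrow> pmult a b \<in> Y"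
    and add: "\<And>a b. a \<in> Y \<Longrightarrow> b \<in> Y \<Longrightarrow> pcommute a b \<Longrightarrow> g (pmult a b) = g a + g b"
    and ops: "\<And>y. y \<in> Y \<Longrightarrow> pauli_op n y"
  shows "valid_tree X t \<Longrightarrow> label t \<in> Y \<and> g (label t) = sum_list (map g (leaves t))"
proof (induction t)
  case (PNode p L)
  show ?case
  proof (cases L)
    case Nil then show ?thesis using PNode.prems XY by auto
  next
    case (Cons t ts)
    have v: "\<forall>s\<in>set L. valid_tree X s"
      and cm: "\<forall>i<length L. \<forall>j<length L. pcommute (label (L ! i)) (label (L ! j))"
      and pe: "p = foldr pmult (map label ts) (label t)"
      using PNode.prems Cons by auto
    have IH: "\<forall>s\<in>set L. label s \<in> Y \<and> g (label s) = sum_list (map g (leaves s))"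
      using PNode.IH v by blast
    have cm': "\<forall>u\<in>set L. \<forall>v\<in>set L. pcommute (label u) (label v)"
    proof (intro ballI)
      fix u v assume "u \<in> set L" "v \<in> set L"
      then obtain i j where "i < length L" "L ! i = u" "j < length L" "L ! j = v"
        by (auto simp: in_set_conv_nth)
      then show "pcommute (label u) (label v)" using cm by blast
    qed
    have fc: "foldr pmult (map label ts) (label t) \<in> Y \<and>
        g (foldr pmult (map label ts) (label t)) = g (label t) + sum_list (map g (map label ts))"
      by (rule foldr_cl[OF clo add ops]) (use IH cm' Cons in auto)
    have "sum_list (map g (leaves (PNode p L))) = sum_list (map (\<lambda>s. sum_list (map g (leaves s))) L)"
      using Cons by (simp add: sum_list_concat' o_def)
    also have "\<dots> = sum_list (map (\<lambda>s. g (label s)) L)"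
      using IH by (intro arg_cong[where f = sum_list] map_cong) auto
    also have "\<dots> = g (label t) + sum_list (map g (map label ts))" using Cons by (simp add: o_def)
    finally show ?thesis using fc pe by simp
  qed
qed

theorem mainTheorem7:
  fixes n :: nat and X :: "pauli set" and x :: pauli and \<tau> \<tau>' :: ptree
  assumes "finite X"
    and "\<forall>y\<in>X. hermitian n y"
    and "pauli_op n x"
    and "determining_tree n X x \<tau>"
    and "determining_tree n X (pneg x) \<tau>'"
    and "det_set \<tau> = det_set \<tau>'"
  shows "state_indep_AvN_partial_closure n X"
proof -
  define Y where "Y = partial_closure n X"
  have hY: "\<And>y. y \<in> Y \<Longrightarrow> hermitian n y" using closure_herm assms(2) Y_def by blast
  have oY: "\<And>y. y \<in> Y \<Longrightarrow> pauli_op n y" using hY by (simp add: hermitian_def)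
  have finY: "finite Y" using finite_subset[OF _ finite_ops[of n]] oY by blast
  have clo: "\<And>a b. a \<in> Y \<Longrightarrow> b \<in> Y \<Longrightarrow> pcommute a b \<Longrightarrow> pmult a b \<in> Y"
    unfolding Y_def by (rule partial_closure.prod)
  have XY: "X \<subseteq> Y" unfolding Y_def using partial_closure.base by blast
  have pidY: "pid n \<in> Y" unfolding Y_def by (rule partial_closure.ident)
  have refl: "\<And>a. pcommute a a" by (simp add: pcommute_def)
  have opid: "pauli_op n (pid n)" by (simp add: pauli_op_def pid_def)
  have sid0: "sign_id n 0 = pid n" by (simp add: sign_id_def pid_def)
  show ?thesis unfolding state_indep_AvN_partial_closure_def theory_inconsistent_def Y_def[symmetric]
  proof
    assume "\<exists>g :: pauli \<Rightarrow> bit. \<forall>(C, r, a)\<in>linear_theory n Y. (\<Sum>y\<in>C. r y * g y) = a"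
    then obtain g :: "pauli \<Rightarrow> bit" where cons: "\<forall>(C, r, a)\<in>linear_theory n Y. (\<Sum>y\<in>C. r y * g y) = a"
      by blast
    have "sum g {pid n} = 0"
    proof (rule keyl[OF finY cons, of _ "[pid n]"])
      show "{pid n} \<subseteq> Y" using pidY by simp
      show "pairwise_commuting {pid n}" by (simp add: pairwise_commuting_def refl)
      show "foldr pmult [pid n] (pid n) = sign_id n 0" using pid_l[OF opid] sid0 by simp
    qed auto
    then have g0: "g (pid n) = 0" by simp
    have gadd: "g (pmult a b) = g a + g b" if ab: "a \<in> Y" "b \<in> Y" "pcommute a b" for a b
    proof -
      have oa: "pauli_op n a" and ob: "pauli_op n b" using oY ab by auto
      have sa: "pmult a a = pid n" and sb: "pmult b b = pid n" using herm_sq hY ab by auto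
      have oab: "pauli_op n (pmult a b)" using pmult_op oa ob by blast
      show ?thesis
      proof (cases "a = pid n \<or> b = pid n \<or> a = b")
        case True
        then show ?thesis using g0 pid_l[OF ob] pid_r[OF oa] sa bit_self[of "g a"] by auto
      next
        case False
        then have d1: "a \<noteq> pid n" "b \<noteq> pid n" "a \<noteq> b" by auto
        have d2: "pmult a b \<noteq> a"
        proof
          assume e: "pmult a b = a"
          have "b = pmult (pmult a a) b" using sa pid_l[OF ob] by simp
          also have "\<dots> = pmult a (pmult a b)" using pmult_assoc[OF oa oa ob] .
          also have "\<dots> = pid n" using e sa by simp
          finally show False using d1 by simp
        qed
        have d3: "pmult a b \<noteq> b"
        proof
          assume e: "pmult a b = b"
          have "a = pmult a (pmult b b)" using sb pid_r[OF oa] by simp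
          also have "\<dots> = pmult (pmult a b) b" using pmult_assoc[OF oa ob ob] by simp
          also have "\<dots> = pid n" using e sb by simp
          finally show False using d1 by simp
        qed
        have c1: "pcommute a (pmult a b)" using pcomm_prod[OF oa oa ob refl ab(3)] .
        have c2: "pcommute b (pmult a b)" using pcomm_prod[OF ob oa ob pcomm_sym[OF ab(3)] refl] .
        have pc: "pairwise_commuting {a, b, pmult a b}"
          unfolding pairwise_commuting_def using c1 c2 ab(3) refl pcomm_sym by blast
        have e: "pmult b (pmult a b) = a"
        proof -
          have "pmult b (pmult a b) = pmult b (pmult b a)" using ab(3) by (simp add: pcommute_def)
          also have "\<dots> = pmult (pmult b b) a" using pmult_assoc[OF ob ob oa] by simp
          also have "\<dots> = a" using sb pid_l[OF oa] by simp
          finally show ?thesis .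
        qed
        have "foldr pmult [a, b, pmult a b] (pid n) = pmult a (pmult b (pmult a b))"
          using pid_r[OF oab] by simp
        also have "\<dots> = sign_id n 0" using e sa sid0 by simp
        finally have pr: "foldr pmult [a, b, pmult a b] (pid n) = sign_id n 0" .
        have "sum g {a, b, pmult a b} = 0"
          by (rule keyl[OF finY cons _ pc _ _ pr]) (use ab clo d1 d2 d3 in auto)
        moreover have "sum g {a, b, pmult a b} = g a + sum g {b, pmult a b}" by (rule sum.insert) (use d1 d2 in auto)
        moreover have "sum g {b, pmult a b} = g b + sum g {pmult a b}" by (rule sum.insert) (use d3 in auto)
        moreover have "sum g {pmult a b} = g (pmult a b)" by simp
        ultimately have "g a + (g b + g (pmult a b)) = 0" by metis
        then show ?thesis using bit2[of "g a"] bit2[of "g b"] bit2[of "g (pmult a b)"] by auto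
      qed
    qed
    have tr: "valid_tree X t \<Longrightarrow> label t \<in> Y \<and> g (label t) = sum_list (map g (leaves t))" for t
      by (rule tree_l[OF XY clo gadd oY]) auto
    have t1: "x \<in> Y" "g x = sum g (det_set \<tau>)"
      using tr[of \<tau>] assms(4) sum_det[of g "leaves \<tau>"] by (auto simp: determining_tree_def det_set_def)
    have t2: "pneg x \<in> Y" "g (pneg x) = sum g (det_set \<tau>')"
      using tr[of \<tau>'] assms(5) sum_det[of g "leaves \<tau>'"] by (auto simp: determining_tree_def det_set_def)
    have geq: "g x = g (pneg x)" using t1 t2 assms(6) by simp
    have ox: "pauli_op n x" and onx: "pauli_op n (pneg x)" using oY t1 t2 by auto
    have sx: "pmult x x = pid n" using herm_sq hY t1 by auto
    have cx: "pcommute x (pneg x)" by (simp add: pcommute_def pneg_l pneg_r)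
    have dx: "x \<noteq> pneg x"
    proof
      assume "x = pneg x"
      then have e: "fst x = (fst x + 2) mod 4" by (metis fst_conv pneg_def)
      have "fst x < 4" using ox by (simp add: pauli_op_def)
      then have "fst x = 0 \<or> fst x = 1 \<or> fst x = 2 \<or> fst x = 3" by arith
      then show False using e by auto
    qed
    have "foldr pmult [x, pneg x] (pid n) = pmult x (pneg x)" using pid_r[OF onx] by simp
    also have "\<dots> = pneg (pmult x x)" by (rule pneg_r)
    also have "\<dots> = pneg (pid n)" using sx by simp
    also have "\<dots> = sign_id n 1" by (simp add: pneg_def pid_def sign_id_def)
    finally have pr: "foldr pmult [x, pneg x] (pid n) = sign_id n 1" .
    have pc: "pairwise_commuting {x, pneg x}"
      unfolding pairwise_commuting_def using cx refl pcomm_sym by blast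
    have "sum g {x, pneg x} = 1"
      by (rule keyl[OF finY cons _ pc _ _ pr]) (use t1 t2 dx in auto)
    then have "g x + g (pneg x) = 1" using dx by simp
    then show False using geq bit_self[of "g x"] by simp
  qed
qed

end
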